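(* For an entire function $G$, the condition $\limsup_{|z|\to\infty}\operatorname{Re}(\overline{z}G(z))\le 0$ holds if and only if $G(z)=az+b$ with either (i) $a\in\mathbb{C}_-$ and $b\in\mathbb{C}$, or (ii) $a\in i\mathbb{R}$ and $b=0$.
   Context: $\mathbb{C}_-:=\{z\in\mathbb{C}:\operatorname{Re}z<0\}$. *)

theory Defs
  imports "HOL-Complex_Analysis.Complex_Analysis" "HOL-Library.Liminf_Limsup"
begin

definition cminus :: "complex set" where
  "cminus = {z. Re z < 0}"

definition imag_axis :: "complex set" where
  "imag_axis = (\<lambda>t::real. \<i> * complex_of_real t) ` UNIV"

end

theory Submission
  imports Defs
begin

lemma re_lin: "Re (cnj z * (a*z+b)) = Re a * (norm z)^2 + Re (cnj z * b)"
proof -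
  have "cnj z * (a*z+b) = a * (z * cnj z) + cnj z * b" by (simp add: algebra_simps)
  also have "z * cnj z = of_real ((norm z)^2)" by (rule complex_norm_square[symmetric])
  finally show ?thesis by simp
qed

lemma fwd:
  fixes G :: "complex \<Rightarrow> complex"
  assumes hol: "G holomorphic_on UNIV"
    and R: "\<And>z. R \<le> norm z \<Longrightarrow> Re (cnj z * G z) < 1"
  shows "\<exists>a b. \<forall>z. G z = a*z+b"
proof -
  define R1 where "R1 = max R 1"
  define h where "h = (\<lambda>z. if z = 0 then deriv G 0 else (G z - G 0) / (z - 0))"
  have hh: "h holomorphic_on UNIV" unfolding h_def
    by (rule pole_lemma[OF hol]) simp
  have Gh: "G z = G 0 + z * h z" for z
    by (cases "z = 0") (auto simp: h_def)
  have "compact (h ` cball 0 R1)"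
    by (rule compact_continuous_image)
       (auto intro: holomorphic_on_imp_continuous_on holomorphic_on_subset[OF hh])
  then obtain B where B: "\<And>z. z \<in> cball 0 R1 \<Longrightarrow> norm (h z) \<le> B"
    using compact_imp_bounded bounded_iff by (metis imageI)
  define M where "M = max B (1 + norm (G 0))"
  have ReM: "Re (h z) \<le> M" for z
  proof (cases "norm z \<le> R1")
    case True
    then have "norm (h z) \<le> B" using B by simp
    then show ?thesis unfolding M_def using complex_Re_le_cmod[of "h z"] by linarith
  next
    case False
    then have z1: "norm z \<ge> 1" "norm z \<ge> R" unfolding R1_def by auto
    have "Re (cnj z * G z) = Re (cnj z * G 0) + (norm z)^2 * Re (h z)"
      using re_lin[of z "h z" "G 0"] Gh[of z] by (simp add: algebra_simps)
    moreover have "Re (cnj z * G 0) \<ge> - (norm z * norm (G 0))"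
      using abs_Re_le_cmod[of "cnj z * G 0"] by (simp add: norm_mult)
    ultimately have "(norm z)^2 * Re (h z) < 1 + norm z * norm (G 0)"
      using R[OF z1(2)] by linarith
    also have "\<dots> \<le> (norm z)^2 * (1 + norm (G 0))"
    proof -
      have "1 \<le> (norm z)^2" using z1 by (simp add: one_le_power)
      moreover have "norm z * norm (G 0) \<le> (norm z)^2 * norm (G 0)"
        using z1 mult_right_mono[of 1 "norm z" "norm z"] by (intro mult_right_mono) (auto simp: power2_eq_square)
      ultimately show ?thesis by (simp add: algebra_simps)
    qed
    finally have "Re (h z) < 1 + norm (G 0)"
      using z1 by (simp add: mult_less_cancel_left)
    then show ?thesis unfolding M_def by linarith
  qed
  define c :: complex where "c = of_real (M + 1)"
  have nz: "norm (h z - c) \<ge> 1" for z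
  proof -
    have "Re (h z - c) \<le> -1" using ReM[of z] by (simp add: c_def)
    then show ?thesis using abs_Re_le_cmod[of "h z - c"] by linarith
  qed
  have hnc: "h z - c \<noteq> 0" for z using nz[of z] by auto
  define g where "g = (\<lambda>z. 1 / (h z - c))"
  have gh: "g holomorphic_on UNIV" unfolding g_def
    using hnc by (intro holomorphic_intros hh) auto
  have "bounded (range g)"
    unfolding bounded_iff
  proof (intro exI allI ballI)
    fix y assume "y \<in> range g"
    then obtain z where "y = g z" by auto
    then show "norm y \<le> 1" using nz[of z] by (simp add: g_def norm_divide divide_le_eq)
  qed
  then have "g constant_on UNIV" by (rule Liouville_theorem[OF gh])
  then obtain k where k: "\<And>z. g z = k" unfolding constant_on_def by auto
  have hc: "h z = h 0" for z
  proof -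
    have "1 / (h z - c) = 1 / (h 0 - c)" using k[of z] k[of 0] by (simp add: g_def)
    then have "h z - c = h 0 - c" by simp
    then show ?thesis by simp
  qed
  have "\<forall>z. G z = h 0 * z + G 0"
  proof
    fix z show "G z = h 0 * z + G 0" using Gh[of z] hc[of z] by (metis add.commute mult.commute)
  qed
  then show ?thesis by blast
qed

lemma cond:
  fixes a b :: complex
  assumes R: "\<And>z. R \<le> norm z \<Longrightarrow> Re (cnj z * (a*z+b)) < 1"
  shows "a \<in> cminus \<or> (a \<in> imag_axis \<and> b = 0)"
proof -
  have "\<not> Re a > 0"
  proof
    assume pos: "Re a > 0"
    define t where "t = max R 1 + (1 + norm b) / Re a"
    have q: "(1 + norm b) / Re a \<ge> 0" using pos by simp
    have t1: "t \<ge> 1" "t \<ge> R" using q unfolding t_def by linarith+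
    have "Re a * t = Re a * max R 1 + (1 + norm b)"
      unfolding t_def using pos by (simp add: distrib_left field_simps)
    moreover have "Re a * max R 1 \<ge> 0" using pos by simp
    ultimately have at: "Re a * t \<ge> 1 + norm b" by linarith
    have n: "norm (complex_of_real t) = t" using t1 by simp
    have "Re (cnj (of_real t) * (a * of_real t + b)) = Re a * t^2 + t * Re b"
      using re_lin[of "of_real t" a b] n by simp
    moreover have "t * Re b \<ge> t * (- norm b)"
      using abs_Re_le_cmod[of b] t1 by (intro mult_left_mono) auto
    moreover have "t * (Re a * t - norm b) \<ge> t * 1"
      using at t1 by (intro mult_left_mono) auto
    ultimately have "Re (cnj (of_real t) * (a * of_real t + b)) \<ge> 1"
      using t1 by (simp add: power2_eq_square algebra_simps)
    moreover have "R \<le> norm (of_real t :: complex)" using t1 n by simp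
    ultimately show False using R[of "of_real t"] by linarith
  qed
  show ?thesis
  proof (cases "Re a < 0")
    case True then show ?thesis by (simp add: cminus_def)
  next
    case False
    then have Re0: "Re a = 0" using \<open>\<not> Re a > 0\<close> by linarith
    have b0: "b = 0"
    proof (rule ccontr)
      assume bn: "b \<noteq> 0"
      then have nb: "norm b > 0" by simp
      define t where "t = (\<bar>R\<bar> + 1) / norm b + 1 / (norm b)^2"
      define z where "z = of_real t * b"
      have tpos: "t \<ge> 0" unfolding t_def using nb by simp
      have "norm z = t * norm b" unfolding z_def using tpos by (simp add: norm_mult)
      also have "\<dots> = \<bar>R\<bar> + 1 + 1 / norm b" unfolding t_def using nb
        by (simp add: field_simps power2_eq_square)
      finally have "norm z = \<bar>R\<bar> + 1 + 1 / norm b" .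
      moreover have "1 / norm b \<ge> 0" using nb by simp
      ultimately have zR: "R \<le> norm z" by linarith
      have "cnj z * b = of_real t * (b * cnj b)" unfolding z_def by simp
      also have "b * cnj b = of_real ((norm b)^2)" by (rule complex_norm_square[symmetric])
      finally have "Re (cnj z * b) = t * (norm b)^2" by simp
      moreover have "t * (norm b)^2 = (\<bar>R\<bar> + 1) * norm b + 1" unfolding t_def using nb
        by (simp add: field_simps power2_eq_square)
      moreover have "(\<bar>R\<bar> + 1) * norm b \<ge> 0" using nb by simp
      ultimately have "Re (cnj z * b) \<ge> 1" by linarith
      then show False using R[OF zR] re_lin[of z a b] Re0 by simp
    qed
    have "a = \<i> * complex_of_real (Im a)" using Re0 by (simp add: complex_eq_iff)
    then have "a \<in> imag_axis" unfolding imag_axis_def by blast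
    with b0 show ?thesis by simp
  qed
qed

theorem proposition2p5:
  fixes G :: "complex \<Rightarrow> complex"
  assumes "G holomorphic_on UNIV"
  shows "Limsup at_infinity (\<lambda>z. ereal (Re (cnj z * G z))) \<le> 0 \<longleftrightarrow>
         (\<exists>a b. (\<forall>z. G z = a * z + b) \<and>
                ((a \<in> cminus) \<or> (a \<in> imag_axis \<and> b = 0)))"
proof
  assume L: "Limsup at_infinity (\<lambda>z. ereal (Re (cnj z * G z))) \<le> 0"
  then have "eventually (\<lambda>z. ereal (Re (cnj z * G z)) < 1) at_infinity"
    by (intro Limsup_lessD) (simp add: le_less_trans)
  then obtain R where R: "\<And>z. R \<le> norm z \<Longrightarrow> Re (cnj z * G z) < 1"
    unfolding eventually_at_infinity by auto
  obtain a b where ab: "\<forall>z. G z = a*z+b" using fwd[OF assms R] by blast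
  have "a \<in> cminus \<or> (a \<in> imag_axis \<and> b = 0)"
    by (rule cond[of R]) (use R ab in auto)
  then show "\<exists>a b. (\<forall>z. G z = a * z + b) \<and> ((a \<in> cminus) \<or> (a \<in> imag_axis \<and> b = 0))"
    using ab by blast
next
  assume "\<exists>a b. (\<forall>z. G z = a * z + b) \<and> ((a \<in> cminus) \<or> (a \<in> imag_axis \<and> b = 0))"
  then obtain a b where ab: "\<And>z. G z = a * z + b"
    and c: "a \<in> cminus \<or> (a \<in> imag_axis \<and> b = 0)" by blast
  show "Limsup at_infinity (\<lambda>z. ereal (Re (cnj z * G z))) \<le> 0"
  proof (rule Limsup_bounded)
    show "eventually (\<lambda>z. ereal (Re (cnj z * G z)) \<le> 0) at_infinity"
      using c
    proof
      assume "a \<in> cminus"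
      then have neg: "Re a < 0" by (simp add: cminus_def)
      show ?thesis unfolding eventually_at_infinity
      proof (intro exI allI impI)
        fix z :: complex assume zb: "norm b / (- Re a) \<le> norm z"
        have p: "- Re a > 0" using neg by simp
        have "norm b \<le> (- Re a) * norm z" using zb pos_divide_le_eq[OF p] by (simp only: mult.commute)
        then have "norm z * norm b \<le> norm z * ((- Re a) * norm z)"
          by (intro mult_left_mono) auto
        moreover have "Re (cnj z * b) \<le> norm z * norm b"
          using complex_Re_le_cmod[of "cnj z * b"] by (simp add: norm_mult)
        ultimately show "ereal (Re (cnj z * G z)) \<le> 0"
          using re_lin[of z a b] ab[of z] by (simp add: power2_eq_square algebra_simps)
      qed
    next
      assume "a \<in> imag_axis \<and> b = 0"
      then obtain t where "a = \<i> * of_real t" "b = 0" unfolding imag_axis_def by auto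
      then show ?thesis using re_lin ab by simp
    qed
  qed
qed

end
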